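(* Let $(n,w)$ be an instance of TSP with $w:E_n\to[-1,1]$ and $w[K_n]=d\binom{n}{2}$ for some $d\in[0,1]$. Let $X_0,X_1,\dots,X_{n-1}$ be the Hamilton martingale for $(n,w)$, let $Y_i=X_i-X_{i-1}$ ($1\le i\le n-1$) be its difference sequence and let $W=\sum_{i=1}^{n-1}\mathbb{E}(Y_i^2\mid\mathcal{F}_{i-1})$ be its predictable quadratic variation. Then, uniformly, $|Y_i|\le 6$ for all $i$ and $W\le 60(\sqrt{d}\,n+1)$.
   Context: $K_n=(V_n,E_n)$ is the complete graph; $w[G]=\sum_{e\in E(G)}|w(e)|$. Hamilton martingale: let $\tilde{\mathcal H}_n$ be the set of all $(n-1)!$ directed Hamilton cycles of $K_n$ with the uniform probability measure; $w(H)$ for directed $H$ is the sum of weights of its underlying undirected edges. Fix a distinguished vertex $v_0$ with $\sum_{v\in V_n\setminus\{v_0\}}|w(v_0v)|\le 2w[K_n]/n$. For $0\le k\le n-1$, let $\mathcal F_k$ be the $\sigma$-field generated by the partition of $\tilde{\mathcal H}_n$ according to the sequence $(v_1,\dots,v_k)$ of the first $k$ vertices following $v_0$ on the cycle. With $X=w(H)$ for uniformly random $H\in\tilde{\mathcal H}_n$, the Hamilton martingale is $X_i:=\mathbb{E}(X\mid\mathcal F_i)$, $i=0,\dots,n-1$. *)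

theory Defs
  imports Complex_Main
begin

definition Kn_edges :: "nat \<Rightarrow> nat set set" where
  "Kn_edges n = {e. e \<subseteq> {..<n} \<and> card e = 2}"

definition total_weight :: "nat \<Rightarrow> (nat set \<Rightarrow> real) \<Rightarrow> real" where
  "total_weight n w = (\<Sum>e\<in>Kn_edges n. \<bar>w e\<bar>)"

text \<open>Directed Hamilton cycles of K_n, each written uniquely as the vertex sequence
  (v0, v1, ..., v_{n-1}) read along the cycle starting at the distinguished vertex v0.
  There are (n-1)! of them.\<close>
definition ham_seqs :: "nat \<Rightarrow> nat \<Rightarrow> nat list set" where
  "ham_seqs n v0 = {xs. distinct xs \<and> set xs = {..<n} \<and> xs \<noteq> [] \<and> hd xs = v0}"

definition ham_weight :: "nat \<Rightarrow> (nat set \<Rightarrow> real) \<Rightarrow> nat list \<Rightarrow> real" where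
  "ham_weight n w xs = (\<Sum>i<n. w {xs ! i, xs ! ((i + 1) mod n)})"

text \<open>Conditional expectation (uniform measure) of f given F_k, the sigma-field generated
  by the first k vertices following v0, i.e. by the prefix of length k+1.\<close>
definition cond_exp_prefix ::
  "nat \<Rightarrow> nat \<Rightarrow> nat \<Rightarrow> (nat list \<Rightarrow> real) \<Rightarrow> nat list \<Rightarrow> real" where
  "cond_exp_prefix n v0 k f xs =
     (let C = {ys \<in> ham_seqs n v0. take (k + 1) ys = take (k + 1) xs}
      in (\<Sum>ys\<in>C. f ys) / real (card C))"

definition ham_mart :: "nat \<Rightarrow> (nat set \<Rightarrow> real) \<Rightarrow> nat \<Rightarrow> nat \<Rightarrow> nat list \<Rightarrow> real" where
  "ham_mart n w v0 k = cond_exp_prefix n v0 k (ham_weight n w)"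

definition ham_diff :: "nat \<Rightarrow> (nat set \<Rightarrow> real) \<Rightarrow> nat \<Rightarrow> nat \<Rightarrow> nat list \<Rightarrow> real" where
  "ham_diff n w v0 i xs = ham_mart n w v0 i xs - ham_mart n w v0 (i - 1) xs"

definition ham_pqv :: "nat \<Rightarrow> (nat set \<Rightarrow> real) \<Rightarrow> nat \<Rightarrow> nat list \<Rightarrow> real" where
  "ham_pqv n w v0 xs =
     (\<Sum>i=1..n-1. cond_exp_prefix n v0 (i - 1) (\<lambda>ys. (ham_diff n w v0 i ys)^2) xs)"

end

theory Submission
  imports Defs "HOL-Combinatorics.Multiset_Permutations"
begin


lemma sum_perm_cons:
  assumes "finite A" "A \<noteq> {}"
  shows "(\<Sum>zs\<in>permutations_of_set A. g zs) = (\<Sum>x\<in>A. \<Sum>zs\<in>permutations_of_set (A-{x}). g (x#zs))"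
proof -
  have "(\<Sum>zs\<in>permutations_of_set A. g zs) = (\<Sum>zs\<in>(\<Union>x\<in>A. (\<lambda>xs. x # xs) ` permutations_of_set (A - {x})). g zs)"
    by (subst permutations_of_set_nonempty[OF assms(2)]) simp
  also have "\<dots> = (\<Sum>x\<in>A. \<Sum>zs\<in>(\<lambda>xs. x # xs) ` permutations_of_set (A - {x}). g zs)"
    by (rule sum.UNION_disjoint) (use assms in auto)
  also have "\<dots> = (\<Sum>x\<in>A. \<Sum>zs\<in>permutations_of_set (A-{x}). g (x#zs))"
    by (rule sum.cong[OF refl], subst sum.reindex) (auto simp: inj_on_def)
  finally show ?thesis .
qed


fun pw :: "(nat set \<Rightarrow> real) \<Rightarrow> nat list \<Rightarrow> real" where
  "pw w (x#y#r) = w {x,y} + pw w (y#r)"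
| "pw w _ = 0"

definition G :: "(nat set \<Rightarrow> real) \<Rightarrow> nat \<Rightarrow> nat \<Rightarrow> nat list \<Rightarrow> real" where
  "G w v0 a zs = pw w (a#zs) + w {last (a#zs), v0}"

definition F :: "(nat set \<Rightarrow> real) \<Rightarrow> nat \<Rightarrow> nat \<Rightarrow> nat set \<Rightarrow> real" where
  "F w v0 a A = (\<Sum>zs\<in>permutations_of_set A. G w v0 a zs) / fact (card A)"

lemma G_Cons: "G w v0 a (x#zs) = w {a,x} + G w v0 x zs"
  by (simp add: G_def)

lemma F_empty: "F w v0 a {} = w {a,v0}"
  by (simp add: F_def G_def)

lemma sum_perm_const:
  assumes "finite A"
  shows "(\<Sum>zs\<in>permutations_of_set A. c) = fact (card A) * (c::real)"
  using assms by simp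

lemma fact_card_minus:
  assumes "finite A" "x \<in> A"
  shows "(fact (card A) :: real) = real (card A) * fact (card (A - {x}))"
proof -
  have "card A = Suc (card (A - {x}))" using card_Suc_Diff1[OF assms] by simp
  then show ?thesis by (simp add: fact_Suc)
qed

lemma F_rec:
  assumes "finite A" "A \<noteq> {}"
  shows "F w v0 a A = (\<Sum>x\<in>A. w {a,x} + F w v0 x (A-{x})) / real (card A)"
proof -
  have "(\<Sum>zs\<in>permutations_of_set A. G w v0 a zs)
      = (\<Sum>x\<in>A. \<Sum>zs\<in>permutations_of_set (A-{x}). w {a,x} + G w v0 x zs)"
    by (simp add: sum_perm_cons[OF assms] G_Cons)
  also have "\<dots> = (\<Sum>x\<in>A. fact (card A - 1) * (w {a,x} + F w v0 x (A-{x})))"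
  proof (rule sum.cong[OF refl])
    fix x assume x: "x \<in> A"
    have c: "card (A - {x}) = card A - 1" using x assms by simp
    show "(\<Sum>zs\<in>permutations_of_set (A-{x}). w {a,x} + G w v0 x zs)
        = fact (card A - 1) * (w {a,x} + F w v0 x (A-{x}))"
      using assms by (simp add: sum.distrib F_def c field_simps)
  qed
  also have "\<dots> = fact (card A - 1) * (\<Sum>x\<in>A. w {a,x} + F w v0 x (A-{x}))"
    by (simp add: sum_distrib_left)
  finally have eq: "(\<Sum>zs\<in>permutations_of_set A. G w v0 a zs) = fact (card A - 1) * (\<Sum>x\<in>A. w {a,x} + F w v0 x (A-{x}))" .
  obtain x where x: "x \<in> A" using assms by auto
  have "(fact (card A) :: real) = real (card A) * fact (card A - 1)"
    using fact_card_minus[OF assms(1) x] assms x by simp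
  moreover have "card A > 0" using assms by (simp add: card_gt_0_iff)
  ultimately show ?thesis unfolding F_def eq by (simp add: field_simps)
qed

lemma avg_perm_hd:
  assumes "finite A" "A \<noteq> {}"
  shows "(\<Sum>zs\<in>permutations_of_set A. h (hd zs)) / fact (card A) = (\<Sum>x\<in>A. (h x::real)) / real (card A)"
proof -
  have "(\<Sum>zs\<in>permutations_of_set A. h (hd zs)) = (\<Sum>x\<in>A. fact (card A - 1) * h x)"
    using assms by (simp add: sum_perm_cons[OF assms])
  also have "\<dots> = fact (card A - 1) * (\<Sum>x\<in>A. h x)" by (simp add: sum_distrib_left)
  finally have eq: "(\<Sum>zs\<in>permutations_of_set A. h (hd zs)) = fact (card A - 1) * (\<Sum>x\<in>A. h x)" .
  obtain x where x: "x \<in> A" using assms by auto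
  have "(fact (card A) :: real) = real (card A) * fact (card A - 1)"
    using fact_card_minus[OF assms(1) x] assms x by simp
  moreover have "card A > 0" using assms by (simp add: card_gt_0_iff)
  ultimately show ?thesis unfolding eq by (simp add: field_simps)
qed

definition S1 :: "(nat set \<Rightarrow> real) \<Rightarrow> nat \<Rightarrow> nat set \<Rightarrow> real" where
  "S1 w a A = (\<Sum>u\<in>A. w {a,u})"

definition Q :: "(nat set \<Rightarrow> real) \<Rightarrow> nat set \<Rightarrow> real" where
  "Q w A = (\<Sum>x\<in>A. S1 w x (A - {x}))"

lemma Q_remove:
  assumes "finite A" "x \<in> A"
  shows "Q w A = Q w (A - {x}) + 2 * S1 w x (A - {x})"
proof -
  have "Q w A = S1 w x (A - {x}) + (\<Sum>y\<in>A-{x}. S1 w y (A - {y}))"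
    unfolding Q_def using assms by (simp add: sum.remove)
  also have "(\<Sum>y\<in>A-{x}. S1 w y (A - {y})) = (\<Sum>y\<in>A-{x}. w {y,x} + S1 w y (A - {x} - {y}))"
  proof (rule sum.cong[OF refl])
    fix y assume y: "y \<in> A - {x}"
    have "A - {y} = insert x (A - {x} - {y})" using y assms by auto
    then show "S1 w y (A - {y}) = w {y,x} + S1 w y (A - {x} - {y})"
      unfolding S1_def using assms by simp
  qed
  also have "\<dots> = S1 w x (A - {x}) + Q w (A - {x})"
    by (simp add: sum.distrib Q_def S1_def insert_commute)
  finally show ?thesis by simp
qed

lemma sum_Q_remove:
  assumes "finite A"
  shows "(\<Sum>x\<in>A. Q w (A - {x})) = (real (card A) - 2) * Q w A"
proof -
  have "(\<Sum>x\<in>A. Q w (A - {x})) = (\<Sum>x\<in>A. Q w A - 2 * S1 w x (A - {x}))"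
    by (rule sum.cong[OF refl]) (use Q_remove[OF assms] in force)
  also have "\<dots> = real (card A) * Q w A - 2 * Q w A"
    by (simp add: sum_subtractf sum_distrib_left[symmetric] Q_def)
  finally show ?thesis by (simp add: algebra_simps)
qed

lemma sum_S1_remove:
  assumes "finite A"
  shows "(\<Sum>x\<in>A. S1 w b (A - {x})) = (real (card A) - 1) * S1 w b A"
proof -
  have "(\<Sum>x\<in>A. S1 w b (A - {x})) = (\<Sum>x\<in>A. S1 w b A - w {b,x})"
    by (rule sum.cong[OF refl]) (use assms in \<open>simp add: S1_def sum_diff1\<close>)
  also have "\<dots> = real (card A) * S1 w b A - S1 w b A"
    by (simp add: sum_subtractf S1_def)
  finally show ?thesis by (simp add: algebra_simps)
qed

lemma F_closed:
  "finite A \<Longrightarrow> card A = Suc k \<Longrightarrow>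
   F w v0 a A = (S1 w a A + S1 w v0 A + Q w A) / real (card A)"
proof (induction k arbitrary: A a)
  case 0
  then obtain u where A: "A = {u}" by (auto simp: card_Suc_eq)
  show ?case using A by (simp add: F_rec F_empty S1_def Q_def insert_commute)
next
  case (Suc k)
  have ne: "A \<noteq> {}" using Suc.prems by auto
  have IH: "F w v0 x (A - {x}) = (S1 w x (A-{x}) + S1 w v0 (A-{x}) + Q w (A-{x})) / (real (card A) - 1)"
    if x: "x \<in> A" for x
  proof -
    have "card (A - {x}) = Suc k" using Suc.prems x by simp
    then show ?thesis using Suc.IH[of "A - {x}" x] Suc.prems x by simp
  qed
  have m: "real (card A) - 1 \<noteq> 0" "real (card A) \<noteq> 0" using Suc.prems by auto
  have "(\<Sum>x\<in>A. w {a,x} + F w v0 x (A-{x}))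
      = S1 w a A + (\<Sum>x\<in>A. S1 w x (A-{x}) + S1 w v0 (A-{x}) + Q w (A-{x})) / (real (card A) - 1)"
  proof -
    have "(\<Sum>x\<in>A. w {a,x} + F w v0 x (A-{x})) = S1 w a A + (\<Sum>x\<in>A. (S1 w x (A-{x}) + S1 w v0 (A-{x}) + Q w (A-{x})) / (real (card A) - 1))"
      by (simp add: sum.distrib IH S1_def)
    then show ?thesis by (simp only: sum_divide_distrib)
  qed
  also have "(\<Sum>x\<in>A. S1 w x (A-{x}) + S1 w v0 (A-{x}) + Q w (A-{x}))
      = Q w A + (real (card A) - 1) * S1 w v0 A + (real (card A) - 2) * Q w A"
    using Suc.prems by (simp add: sum.distrib sum_Q_remove sum_S1_remove Q_def[symmetric])
  also have "\<dots> / (real (card A) - 1) = S1 w v0 A + Q w A"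
    using m by (simp add: field_simps)
  finally show ?case using F_rec[OF Suc.prems(1) ne] by simp
qed



lemma pw_sum: "pw w ys = (\<Sum>i<length ys - 1. w {ys!i, ys!(i+1)})"
proof (induction ys)
  case Nil then show ?case by simp
next
  case (Cons x r)
  show ?case
  proof (cases r)
    case Nil then show ?thesis by simp
  next
    case (Cons y r')
    have "(\<Sum>i<length (x#r) - 1. w {(x#r)!i, (x#r)!(i+1)}) = (\<Sum>i<Suc (length r'). w {(x#r)!i, (x#r)!(i+1)})"
      using Cons by simp
    also have "\<dots> = w {x,y} + (\<Sum>i<length r'. w {r!i, r!(i+1)})"
      by (subst sum.lessThan_Suc_shift) (simp add: Cons)
    finally show ?thesis using Cons.IH Cons by simp
  qed
qed

lemma ham_weight_pw:
  assumes "length ys = n" "n \<ge> 1"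
  shows "ham_weight n w ys = pw w ys + w {last ys, hd ys}"
proof -
  have n: "n = Suc (n - 1)" using assms by simp
  have "ham_weight n w ys = (\<Sum>i<Suc (n-1). w {ys ! i, ys ! ((i + 1) mod n)})"
    unfolding ham_weight_def using n by simp
  also have "\<dots> = (\<Sum>i<n-1. w {ys ! i, ys ! ((i + 1) mod n)}) + w {ys ! (n-1), ys ! ((n - 1 + 1) mod n)}"
    by simp
  also have "(\<Sum>i<n-1. w {ys ! i, ys ! ((i + 1) mod n)}) = (\<Sum>i<n-1. w {ys ! i, ys ! (i + 1)})"
    by (rule sum.cong[OF refl]) auto
  also have "\<dots> = pw w ys" using assms by (simp add: pw_sum)
  also have "ys ! (n-1) = last ys" using assms by (cases ys) (auto simp: last_conv_nth)
  also have "ys ! ((n - 1 + 1) mod n) = hd ys" using assms by (cases ys) (auto simp: hd_conv_nth)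
  finally show ?thesis .
qed

lemma pw_append: "p \<noteq> [] \<Longrightarrow> pw w (p @ zs) = pw w p + pw w (last p # zs)"
proof (induction p)
  case Nil then show ?case by simp
next
  case (Cons x r)
  show ?case by (cases r) (use Cons in auto)
qed

lemma ham_seqs_length: "xs \<in> ham_seqs n v0 \<Longrightarrow> length xs = n"
  unfolding ham_seqs_def by (metis (mono_tags) card_lessThan distinct_card mem_Collect_eq)

lemma class_eq:
  assumes xs: "xs \<in> ham_seqs n v0" and k: "k < n"
  defines "p \<equiv> take (k+1) xs"
  shows "{ys \<in> ham_seqs n v0. take (k+1) ys = p} = (\<lambda>zs. p @ zs) ` permutations_of_set ({..<n} - set p)"
proof -
  have lx: "length xs = n" using ham_seqs_length[OF xs] .
  have lp: "length p = k+1" using lx k unfolding p_def by simp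
  have dx: "distinct xs" "set xs = {..<n}" "xs \<noteq> []" "hd xs = v0" using xs unfolding ham_seqs_def by auto
  have dp: "distinct p" using dx unfolding p_def by simp
  have pne: "p \<noteq> []" using lp by auto
  have hp: "hd p = v0" using dx unfolding p_def by (simp add: hd_take)
  have sp: "set p \<subseteq> {..<n}" using dx unfolding p_def by (metis set_take_subset)
  show ?thesis
  proof (intro equalityI subsetI)
    fix ys assume "ys \<in> {ys \<in> ham_seqs n v0. take (k+1) ys = p}"
    then have ys: "ys \<in> ham_seqs n v0" "take (k+1) ys = p" by auto
    have dy: "distinct ys" "set ys = {..<n}" using ys unfolding ham_seqs_def by auto
    have eq: "ys = p @ drop (k+1) ys" using ys(2) by (metis append_take_drop_id)
    have d2: "distinct (p @ drop (k+1) ys)" using dy eq by simp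
    have s2: "set p \<union> set (drop (k+1) ys) = {..<n}" using dy(2) eq by (metis set_append)
    have "set (drop (k+1) ys) = {..<n} - set p" using d2 s2 by auto
    moreover have "distinct (drop (k+1) ys)" using d2 by simp
    ultimately have "set (drop (k+1) ys) = {..<n} - set p" "distinct (drop (k+1) ys)" by auto
    then show "ys \<in> (\<lambda>zs. p @ zs) ` permutations_of_set ({..<n} - set p)"
      using eq by (intro image_eqI[of _ _ "drop (k+1) ys"]) auto
  next
    fix ys assume "ys \<in> (\<lambda>zs. p @ zs) ` permutations_of_set ({..<n} - set p)"
    then obtain zs where zs: "ys = p @ zs" "set zs = {..<n} - set p" "distinct zs"
      by (auto simp: permutations_of_set_def)
    have "distinct ys" using zs dp by auto
    moreover have "set ys = {..<n}" using zs sp by auto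
    moreover have "ys \<noteq> []" "hd ys = v0" using zs pne hp by auto
    moreover have "take (k+1) ys = p" using zs lp by simp
    ultimately show "ys \<in> {ys \<in> ham_seqs n v0. take (k+1) ys = p}" unfolding ham_seqs_def by auto
  qed
qed

lemma cond_exp_formula:
  assumes xs: "xs \<in> ham_seqs n v0" and k: "k < n"
  shows "cond_exp_prefix n v0 k f xs =
    (\<Sum>zs\<in>permutations_of_set ({..<n} - set (take (k+1) xs)). f (take (k+1) xs @ zs))
      / fact (card ({..<n} - set (take (k+1) xs)))"
proof -
  let ?p = "take (k+1) xs" and ?R = "{..<n} - set (take (k+1) xs)"
  have inj: "inj_on (\<lambda>zs. ?p @ zs) (permutations_of_set ?R)" by (auto simp: inj_on_def)
  have fin: "finite ?R" by simp
  show ?thesis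
    unfolding cond_exp_prefix_def Let_def class_eq[OF xs k]
    by (simp only: sum.reindex[OF inj] card_image[OF inj] card_permutations_of_set[OF fin] o_def of_nat_fact)
qed

lemma mart_formula:
  assumes xs: "xs \<in> ham_seqs n v0" and k: "k < n"
  shows "ham_mart n w v0 k xs = pw w (take (k+1) xs) + F w v0 (last (take (k+1) xs)) ({..<n} - set (take (k+1) xs))"
proof -
  let ?p = "take (k+1) xs" and ?R = "{..<n} - set (take (k+1) xs)"
  have lx: "length xs = n" using ham_seqs_length[OF xs] .
  have dx: "xs \<noteq> []" "hd xs = v0" using xs unfolding ham_seqs_def by auto
  have pne: "?p \<noteq> []" using dx by simp
  have hp: "hd ?p = v0" using dx by (simp add: hd_take)
  have lp: "length ?p = k + 1" using lx k by simp
  have "\<forall>zs\<in>permutations_of_set ?R. ham_weight n w (?p @ zs) = pw w ?p + G w v0 (last ?p) zs"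
  proof
    fix zs assume zs: "zs \<in> permutations_of_set ?R"
    have "length zs = card ?R" using length_finite_permutations_of_set[OF zs] .
    moreover have "card ?R = n - (k+1)"
    proof -
      have ds: "distinct xs" "set xs = {..<n}" using xs unfolding ham_seqs_def by auto
      have "card (set ?p) = k+1" using ds lp by (simp add: distinct_card)
      moreover have "set ?p \<subseteq> {..<n}" using ds by (metis set_take_subset)
      ultimately show ?thesis by (simp add: card_Diff_subset)
    qed
    ultimately have "length (?p @ zs) = n" using lp k by simp
    then have "ham_weight n w (?p @ zs) = pw w (?p @ zs) + w {last (?p @ zs), hd (?p @ zs)}"
      using k by (intro ham_weight_pw) auto
    also have "\<dots> = pw w ?p + G w v0 (last ?p) zs"
      using pne hp by (simp add: pw_append G_def)
    finally show "ham_weight n w (?p @ zs) = pw w ?p + G w v0 (last ?p) zs" .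
  qed
  then have "(\<Sum>zs\<in>permutations_of_set ?R. ham_weight n w (?p @ zs))
        = fact (card ?R) * pw w ?p + (\<Sum>zs\<in>permutations_of_set ?R. G w v0 (last ?p) zs)"
    by (simp add: sum.distrib)
  then show ?thesis
    unfolding ham_mart_def cond_exp_formula[OF xs k] F_def by (simp add: field_simps)
qed



lemma edge_bound:
  assumes "\<forall>e\<in>Kn_edges n. \<bar>w e\<bar> \<le> 1" "a < n" "b < n" "a \<noteq> b"
  shows "\<bar>w {a,b}\<bar> \<le> 1"
proof -
  have "{a,b} \<in> Kn_edges n" using assms unfolding Kn_edges_def by auto
  then show ?thesis using assms by auto
qed

lemma variance_le:
  fixes g :: "nat \<Rightarrow> real"
  assumes "finite R" "card R > 0"
  shows "(\<Sum>x\<in>R. (g x - (\<Sum>y\<in>R. g y) / card R)^2) \<le> (\<Sum>x\<in>R. (g x - c)^2)"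
proof -
  define a where "a = (\<Sum>y\<in>R. g y) / card R"
  have s0: "(\<Sum>x\<in>R. g x - a) = 0" using assms unfolding a_def by (simp add: sum_subtractf)
  have "(\<Sum>x\<in>R. (g x - c)^2) = (\<Sum>x\<in>R. (g x - a)^2 + 2 * (a - c) * (g x - a) + (a - c)^2)"
    by (rule sum.cong[OF refl]) (simp add: power2_eq_square algebra_simps)
  also have "\<dots> = (\<Sum>x\<in>R. (g x - a)^2) + 2 * (a - c) * (\<Sum>x\<in>R. g x - a) + card R * (a - c)^2"
    by (simp add: sum.distrib sum_distrib_left)
  finally show ?thesis unfolding a_def[symmetric] using s0 by simp
qed

lemma sq3: "((a::real) + b + c)^2 \<le> 3 * (a^2 + b^2 + c^2)"
proof -
  have "0 \<le> (a-b)^2 + (b-c)^2 + (a-c)^2" by simp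
  then show ?thesis by (simp add: power2_eq_square algebra_simps)
qed

lemma step_bound:
  fixes w :: "nat set \<Rightarrow> real" and R :: "nat set"
  assumes wb: "\<forall>e\<in>Kn_edges n. \<bar>w e\<bar> \<le> 1"
    and R: "R \<subseteq> {..<n}" and vk: "vk < n" "vk \<notin> R" and v0: "v0 < n" "v0 \<notin> R"
    and m: "card R \<ge> 2"
  defines "g \<equiv> (\<lambda>x. w {vk,x} + F w v0 x (R - {x}))"
  defines "avg \<equiv> (\<Sum>x\<in>R. g x) / real (card R)"
  shows "(\<forall>x\<in>R. \<bar>g x - avg\<bar> \<le> 6)"
    "(\<Sum>x\<in>R. (g x - avg)^2) / real (card R)
       \<le> 3 * min 1 ((\<Sum>x\<in>R. \<bar>w {vk,x}\<bar>) / real (card R))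
        + 3 * (2 / (real (card R) * (real (card R) - 1)))
        + 3 * min 1 ((\<Sum>x\<in>R. \<Sum>u\<in>R-{x}. \<bar>w {x,u}\<bar>) / (real (card R) * (real (card R) - 1)))"
proof -
  define mr where "mr = real (card R)"
  have fin: "finite R" using R finite_subset by blast
  have mr2: "mr \<ge> 2" using m unfolding mr_def by simp
  define c where "c = (S1 w v0 R + Q w R) / (mr - 1)"
  define A where "A x = (\<Sum>u\<in>R-{x}. \<bar>w {x,u}\<bar>)" for x
  define h where "h x = w {vk,x} - (w {v0,x} + S1 w x (R-{x})) / (mr - 1)" for x
  have gh: "g x - c = h x" if x: "x \<in> R" for x
  proof -
    have cR: "card (R - {x}) = Suc (card R - 2)" using x fin m by simp
    have "F w v0 x (R - {x}) = (S1 w x (R-{x}) + S1 w v0 (R-{x}) + Q w (R-{x})) / (mr - 1)"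
      using F_closed[OF _ cR] fin x m unfolding mr_def by (simp add: of_nat_diff)
    also have "S1 w v0 (R-{x}) = S1 w v0 R - w {v0,x}" unfolding S1_def using fin x by (simp add: sum_diff1)
    also have "Q w (R-{x}) = Q w R - 2 * S1 w x (R-{x})" using Q_remove[OF fin x] by simp
    finally have "F w v0 x (R - {x}) = (S1 w v0 R + Q w R - w {v0,x} - S1 w x (R-{x})) / (mr - 1)"
      by (simp add: algebra_simps)
    then show ?thesis unfolding g_def c_def h_def using mr2 by (simp add: field_simps)
  qed
  have Ale: "A x \<le> mr - 1" "0 \<le> A x" if x: "x \<in> R" for x
  proof -
    have "A x \<le> (\<Sum>u\<in>R-{x}. 1)" unfolding A_def
      by (rule sum_mono) (use x R in \<open>auto intro!: edge_bound[OF wb]\<close>)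
    moreover have "card R \<ge> 1" using m by simp
    ultimately show "A x \<le> mr - 1" using x fin unfolding mr_def by (simp add: of_nat_diff)
    show "0 \<le> A x" unfolding A_def by (simp add: sum_nonneg)
  qed
  have S1le: "\<bar>S1 w x (R-{x})\<bar> \<le> A x" for x unfolding S1_def A_def by (rule sum_abs)
  have w1: "\<bar>w {vk,x}\<bar> \<le> 1" "\<bar>w {v0,x}\<bar> \<le> 1" if x: "x \<in> R" for x
  proof -
    have "x < n" "vk \<noteq> x" "v0 \<noteq> x" using x R vk v0 by auto
    then show "\<bar>w {vk,x}\<bar> \<le> 1" "\<bar>w {v0,x}\<bar> \<le> 1"
      using edge_bound[OF wb] vk v0 by auto
  qed
  have sqle: "a^2 \<le> \<bar>a\<bar>" if "\<bar>a\<bar> \<le> 1" for a :: real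
  proof -
    have "a^2 = \<bar>a\<bar> * \<bar>a\<bar>" by (simp add: power2_eq_square)
    also have "\<dots> \<le> \<bar>a\<bar>" using that by (intro mult_right_le_one_le) auto
    finally show ?thesis .
  qed
  have hb: "\<bar>h x\<bar> \<le> 3" if x: "x \<in> R" for x
  proof -
    have n1: "\<bar>w {v0,x} + S1 w x (R-{x})\<bar> \<le> 1 + (mr - 1)"
      using abs_triangle_ineq[of "w {v0,x}" "S1 w x (R-{x})"] w1[OF x] S1le[of x] Ale[OF x] by linarith
    have "\<bar>(w {v0,x} + S1 w x (R-{x})) / (mr - 1)\<bar> = \<bar>w {v0,x} + S1 w x (R-{x})\<bar> / (mr - 1)"
      using mr2 by (simp add: abs_divide)
    also have "\<dots> \<le> (1 + (mr - 1)) / (mr - 1)"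
      using n1 mr2 by (intro divide_right_mono) auto
    also have "\<dots> \<le> 2" using mr2 by (simp add: field_simps)
    finally show ?thesis unfolding h_def using w1[OF x] by linarith
  qed
  have avgc: "avg - c = (\<Sum>x\<in>R. h x) / mr"
  proof -
    have "(\<Sum>x\<in>R. h x) = (\<Sum>x\<in>R. g x - c)" using gh by simp
    also have "\<dots> = (\<Sum>x\<in>R. g x) - mr * c" unfolding mr_def by (simp add: sum_subtractf)
    finally have "(\<Sum>x\<in>R. h x) = (\<Sum>x\<in>R. g x) - mr * c" .
    then show ?thesis unfolding avg_def mr_def[symmetric] using mr2 by (simp add: field_simps)
  qed
  have "\<bar>\<Sum>x\<in>R. h x\<bar> \<le> (\<Sum>x\<in>R. 3)" using hb by (intro order_trans[OF sum_abs] sum_mono) auto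
  then have hs: "\<bar>\<Sum>x\<in>R. h x\<bar> \<le> 3 * mr" unfolding mr_def by simp
  have "\<bar>avg - c\<bar> = \<bar>\<Sum>x\<in>R. h x\<bar> / mr" unfolding avgc using mr2 by (simp add: abs_divide)
  also have "\<dots> \<le> 3 * mr / mr" using hs mr2 by (intro divide_right_mono) auto
  also have "\<dots> = 3" using mr2 by simp
  finally have "\<bar>avg - c\<bar> \<le> 3" .
  then show "\<forall>x\<in>R. \<bar>g x - avg\<bar> \<le> 6"
  proof (intro ballI)
    fix x assume x: "x \<in> R"
    have "g x - avg = h x - (avg - c)" using gh[OF x] by simp
    then show "\<bar>g x - avg\<bar> \<le> 6" using hb[OF x] \<open>\<bar>avg - c\<bar> \<le> 3\<close> by linarith
  qed
  have "(\<Sum>x\<in>R. (g x - avg)^2) \<le> (\<Sum>x\<in>R. (g x - c)^2)"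
    unfolding avg_def by (rule variance_le) (use fin m in auto)
  also have "\<dots> = (\<Sum>x\<in>R. (h x)^2)" using gh by simp
  also have "\<dots> \<le> (\<Sum>x\<in>R. 3 * (\<bar>w {vk,x}\<bar> + 1 / (mr - 1)^2 + A x / (mr - 1)))"
  proof (rule sum_mono)
    fix x assume x: "x \<in> R"
    have "(h x)^2 \<le> 3 * ((w {vk,x})^2 + (- w {v0,x} / (mr - 1))^2 + (- S1 w x (R-{x}) / (mr - 1))^2)"
    proof -
      have "h x = w {vk,x} + - w {v0,x} / (mr - 1) + - S1 w x (R-{x}) / (mr - 1)"
        unfolding h_def by (simp add: add_divide_distrib)
      then show ?thesis using sq3[of "w {vk,x}" "- w {v0,x} / (mr - 1)" "- S1 w x (R-{x}) / (mr - 1)"] by simp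
    qed
    also have "(w {vk,x})^2 \<le> \<bar>w {vk,x}\<bar>"
      using w1[OF x] sqle by blast
    also have "(- w {v0,x} / (mr - 1))^2 \<le> 1 / (mr - 1)^2"
    proof -
      have "(w {v0,x})^2 \<le> 1" using w1[OF x] sqle[of "w {v0,x}"] by linarith
      then show ?thesis using mr2 by (simp add: power_divide divide_right_mono)
    qed
    also have "(- S1 w x (R-{x}) / (mr - 1))^2 \<le> A x / (mr - 1)"
    proof -
      have "(S1 w x (R-{x}))^2 \<le> (A x)^2"
      proof -
        have "\<bar>S1 w x (R-{x})\<bar>^2 \<le> (A x)^2" using S1le[of x] by (intro power_mono) auto
        then show ?thesis by simp
      qed
      also have "(A x)^2 \<le> A x * (mr - 1)" using Ale[OF x] by (simp add: power2_eq_square mult_left_mono)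
      finally have "(S1 w x (R-{x}))^2 \<le> A x * (mr - 1)" .
      then have "(S1 w x (R-{x}))^2 / (mr - 1)^2 \<le> A x * (mr - 1) / (mr - 1)^2"
        using mr2 by (intro divide_right_mono) auto
      also have "A x * (mr - 1) / (mr - 1)^2 = A x / (mr - 1)" using mr2 by (simp add: power2_eq_square)
      finally show ?thesis by (simp add: power_divide)
    qed
    finally show "(h x)^2 \<le> 3 * (\<bar>w {vk,x}\<bar> + 1 / (mr - 1)^2 + A x / (mr - 1))" by simp
  qed
  also have "\<dots> = 3 * (\<Sum>x\<in>R. \<bar>w {vk,x}\<bar>) + 3 * mr / (mr - 1)^2 + 3 * (\<Sum>x\<in>R. A x) / (mr - 1)"
    unfolding mr_def by (simp add: sum.distrib sum_distrib_left sum_divide_distrib)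
  finally have main: "(\<Sum>x\<in>R. (g x - avg)^2) / mr \<le>
      (3 * (\<Sum>x\<in>R. \<bar>w {vk,x}\<bar>) + 3 * mr / (mr - 1)^2 + 3 * (\<Sum>x\<in>R. A x) / (mr - 1)) / mr"
    using mr2 by (simp add: divide_right_mono)
  have e1: "(\<Sum>x\<in>R. \<bar>w {vk,x}\<bar>) / mr \<le> 1"
  proof -
    have "(\<Sum>x\<in>R. \<bar>w {vk,x}\<bar>) \<le> (\<Sum>x\<in>R. 1)" using w1 by (intro sum_mono) auto
    then show ?thesis using mr2 unfolding mr_def by simp
  qed
  have e3: "(\<Sum>x\<in>R. A x) / (mr * (mr - 1)) \<le> 1"
  proof -
    have "(\<Sum>x\<in>R. A x) \<le> (\<Sum>x\<in>R. mr - 1)" using Ale by (intro sum_mono) auto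
    then show ?thesis using mr2 unfolding mr_def by simp
  qed
  have e2: "1 / (mr - 1)^2 \<le> 2 / (mr * (mr - 1))"
  proof -
    have "1/(mr-1) \<le> 2/mr" using mr2 by (simp add: field_simps)
    then have "1/(mr-1) * (1/(mr-1)) \<le> 2/mr * (1/(mr-1))" by (rule mult_right_mono) (use mr2 in auto)
    moreover have "1/(mr-1) * (1/(mr-1)) = 1 / (mr - 1)^2" by (simp add: power2_eq_square)
    moreover have "2/mr * (1/(mr-1)) = 2 / (mr * (mr - 1))" by simp
    ultimately show ?thesis by simp
  qed
  have "(3 * (\<Sum>x\<in>R. \<bar>w {vk,x}\<bar>) + 3 * mr / (mr - 1)^2 + 3 * (\<Sum>x\<in>R. A x) / (mr - 1)) / mr
      = 3 * ((\<Sum>x\<in>R. \<bar>w {vk,x}\<bar>) / mr) + 3 * (1 / (mr - 1)^2) + 3 * ((\<Sum>x\<in>R. A x) / (mr * (mr - 1)))"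
    using mr2 by (simp add: field_simps)
  also have "\<dots> \<le> 3 * min 1 ((\<Sum>x\<in>R. \<bar>w {vk,x}\<bar>) / mr) + 3 * (2 / (mr * (mr - 1)))
        + 3 * min 1 ((\<Sum>x\<in>R. A x) / (mr * (mr - 1)))"
    using e1 e2 e3 by simp
  finally show "(\<Sum>x\<in>R. (g x - avg)^2) / real (card R)
       \<le> 3 * min 1 ((\<Sum>x\<in>R. \<bar>w {vk,x}\<bar>) / real (card R))
        + 3 * (2 / (real (card R) * (real (card R) - 1)))
        + 3 * min 1 ((\<Sum>x\<in>R. \<Sum>u\<in>R-{x}. \<bar>w {x,u}\<bar>) / (real (card R) * (real (card R) - 1)))"
    using main unfolding mr_def A_def by simp
qed



definition deg :: "nat \<Rightarrow> (nat set \<Rightarrow> real) \<Rightarrow> nat \<Rightarrow> real" where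
  "deg n w v = (\<Sum>u\<in>{..<n}-{v}. \<bar>w {v,u}\<bar>)"

definition DD :: "nat \<Rightarrow> (nat set \<Rightarrow> real) \<Rightarrow> real" where
  "DD n w = (\<Sum>v<n. deg n w v)"

lemma card_R:
  assumes xs: "xs \<in> ham_seqs n v0" and k: "k < n"
  shows "card ({..<n} - set (take (k+1) xs)) = n - (k+1)"
proof -
  have ds: "distinct xs" "set xs = {..<n}" using xs unfolding ham_seqs_def by auto
  have lx: "length xs = n" using ham_seqs_length[OF xs] .
  have "card (set (take (k+1) xs)) = k+1" using ds lx k by (simp add: distinct_card)
  moreover have "set (take (k+1) xs) \<subseteq> {..<n}" using ds by (metis set_take_subset)
  ultimately show ?thesis by (simp add: card_Diff_subset)
qed

lemma per_k:
  assumes xs: "xs \<in> ham_seqs n v0" and k: "k + 1 < n"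
    and wb: "\<forall>e\<in>Kn_edges n. \<bar>w e\<bar> \<le> 1"
  shows "\<bar>ham_diff n w v0 (Suc k) xs\<bar> \<le> 6"
    "cond_exp_prefix n v0 k (\<lambda>ys. (ham_diff n w v0 (Suc k) ys)^2) xs
       \<le> 3 * min 1 (deg n w (xs!k) / real (n - (k+1)))
        + 3 * (2 / (real (n - (k+1)) * (real (n - (k+1)) - 1)))
        + 3 * min 1 (DD n w / (real (n - (k+1)) * (real (n - (k+1)) - 1)))"
proof -
  define p where "p = take (k+1) xs"
  define R where "R = {..<n} - set p"
  define vk where "vk = xs ! k"
  define g where "g = (\<lambda>x. w {vk,x} + F w v0 x (R - {x}))"
  define avg where "avg = (\<Sum>x\<in>R. g x) / real (card R)"
  have lx: "length xs = n" using ham_seqs_length[OF xs] .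
  have dx: "distinct xs" "set xs = {..<n}" "xs \<noteq> []" "hd xs = v0" using xs unfolding ham_seqs_def by auto
  have cR: "card R = n - (k+1)" unfolding R_def p_def using card_R[OF xs] k by simp
  have fin: "finite R" unfolding R_def by simp
  have Rne: "R \<noteq> {}" using cR k by auto
  have Rsub: "R \<subseteq> {..<n}" unfolding R_def by auto
  have lp: "last p = vk" unfolding p_def vk_def using lx k by (simp add: take_Suc_conv_app_nth)
  have vkp: "vk \<in> set p" unfolding p_def vk_def using lx k by (auto simp: in_set_conv_nth intro!: exI[of _ k])
  have pne: "p \<noteq> []" unfolding p_def using dx by simp
  have "hd p = v0" unfolding p_def using dx by (simp add: hd_take)
  then have v0p: "v0 \<in> set p" using pne hd_in_set by metis
  have vkR: "vk \<notin> R" "vk < n" using vkp dx unfolding R_def p_def by (auto dest: in_set_takeD)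
  have v0R: "v0 \<notin> R" "v0 < n" using v0p dx unfolding R_def p_def by (auto dest: in_set_takeD)
  have Favg: "F w v0 vk R = avg" unfolding avg_def g_def using F_rec[OF fin Rne] by simp
  have diff: "ham_diff n w v0 (Suc k) (p @ zs) = g (hd zs) - avg" if zs: "zs \<in> permutations_of_set R" for zs
  proof -
    have ys: "p @ zs \<in> ham_seqs n v0"
      using class_eq[OF xs, of k] k zs unfolding p_def R_def by auto
    have zne: "zs \<noteq> []" using zs Rne by (auto simp: permutations_of_set_def)
    have lp1: "length p = k+1" unfolding p_def using lx k by simp
    have t1: "take (k+1) (p @ zs) = p" using lp1 by simp
    have t2: "take (Suc k + 1) (p @ zs) = p @ [hd zs]" using lp1 zne by (cases zs) auto
    have hzR: "hd zs \<in> R" using zs zne by (auto simp: permutations_of_set_def)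
    have R2: "{..<n} - set (p @ [hd zs]) = R - {hd zs}" unfolding R_def by auto
    have "ham_mart n w v0 (Suc k) (p @ zs) = pw w p + w {vk, hd zs} + F w v0 (hd zs) (R - {hd zs})"
    proof -
      have "ham_mart n w v0 (Suc k) (p @ zs) = pw w (p @ [hd zs]) + F w v0 (last (p @ [hd zs])) ({..<n} - set (p @ [hd zs]))"
        using mart_formula[OF ys, of "Suc k"] k unfolding t2 by simp
      also have "pw w (p @ [hd zs]) = pw w p + w {vk, hd zs}"
        using pw_append[OF pne, of w "[hd zs]"] lp by simp
      finally show ?thesis unfolding R2 by simp
    qed
    moreover have "ham_mart n w v0 k (p @ zs) = pw w p + F w v0 vk R"
      using mart_formula[OF ys, of k] k unfolding t1 lp by (simp add: R_def)
    ultimately show ?thesis unfolding ham_diff_def g_def using Favg by simp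
  qed
  have xsR: "drop (k+1) xs \<in> permutations_of_set R" "xs = p @ drop (k+1) xs"
  proof -
    have "xs \<in> {ys \<in> ham_seqs n v0. take (k+1) ys = p}" using xs unfolding p_def by simp
    then obtain zs where "zs \<in> permutations_of_set R" "xs = p @ zs"
      using class_eq[OF xs, of k] k unfolding p_def R_def by auto
    moreover have "length p = k+1" unfolding p_def using lx k by simp
    ultimately show "drop (k+1) xs \<in> permutations_of_set R" "xs = p @ drop (k+1) xs" by auto
  qed
  have hdR: "hd zs \<in> R" if "zs \<in> permutations_of_set R" for zs
    using that Rne by (cases zs) (auto simp: permutations_of_set_def)
  have ce: "cond_exp_prefix n v0 k (\<lambda>ys. (ham_diff n w v0 (Suc k) ys)^2) xs
        = (\<Sum>x\<in>R. (g x - avg)^2) / real (card R)"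
  proof -
    have "cond_exp_prefix n v0 k (\<lambda>ys. (ham_diff n w v0 (Suc k) ys)^2) xs
        = (\<Sum>zs\<in>permutations_of_set R. (ham_diff n w v0 (Suc k) (p @ zs))^2) / fact (card R)"
      using cond_exp_formula[OF xs, of k] k unfolding p_def R_def by simp
    also have "\<dots> = (\<Sum>zs\<in>permutations_of_set R. (g (hd zs) - avg)^2) / fact (card R)"
      using diff by simp
    also have "\<dots> = (\<Sum>x\<in>R. (g x - avg)^2) / real (card R)"
      by (rule avg_perm_hd[OF fin Rne])
    finally show ?thesis .
  qed
  have degn: "0 \<le> deg n w vk" unfolding deg_def by (simp add: sum_nonneg)
  have DDn: "0 \<le> DD n w" unfolding DD_def deg_def by (simp add: sum_nonneg)
  have conj: "\<bar>ham_diff n w v0 (Suc k) xs\<bar> \<le> 6 \<and>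
    cond_exp_prefix n v0 k (\<lambda>ys. (ham_diff n w v0 (Suc k) ys)^2) xs
       \<le> 3 * min 1 (deg n w (xs!k) / real (n - (k+1)))
        + 3 * (2 / (real (n - (k+1)) * (real (n - (k+1)) - 1)))
        + 3 * min 1 (DD n w / (real (n - (k+1)) * (real (n - (k+1)) - 1)))"
  proof (cases "card R = 1")
    case True
    then obtain x where Rx: "R = {x}" by (auto simp: card_Suc_eq)
    have "avg = g x" unfolding avg_def Rx by simp
    moreover have "ham_diff n w v0 (Suc k) xs = g (hd (drop (k+1) xs)) - avg"
      using diff[OF xsR(1)] xsR(2) by simp
    moreover have "hd (drop (k+1) xs) = x" using hdR[OF xsR(1)] Rx by simp
    ultimately have "ham_diff n w v0 (Suc k) xs = 0" by simp
    moreover have "cond_exp_prefix n v0 k (\<lambda>ys. (ham_diff n w v0 (Suc k) ys)^2) xs = 0"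
      using ce \<open>avg = g x\<close> Rx by simp
    moreover have "0 \<le> 3 * min 1 (deg n w (xs!k) / real (n - (k+1)))
        + 3 * (2 / (real (n - (k+1)) * (real (n - (k+1)) - 1)))
        + 3 * min 1 (DD n w / (real (n - (k+1)) * (real (n - (k+1)) - 1)))"
      using degn DDn cR True unfolding vk_def by simp
    ultimately show ?thesis by simp
  next
    case False
    then have m2: "card R \<ge> 2" using Rne fin by (metis One_nat_def card_0_eq less_2_cases not_le)
    note sb = step_bound[OF wb Rsub vkR(2) vkR(1) v0R(2) v0R(1) m2, folded g_def, folded avg_def]
    have "ham_diff n w v0 (Suc k) xs = g (hd (drop (k+1) xs)) - avg"
      using diff[OF xsR(1)] xsR(2) by simp
    then have a: "\<bar>ham_diff n w v0 (Suc k) xs\<bar> \<le> 6" using sb(1) hdR[OF xsR(1)] unfolding g_def by simp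
    have s1: "(\<Sum>x\<in>R. \<bar>w {vk,x}\<bar>) \<le> deg n w vk" unfolding deg_def
      by (rule sum_mono2) (use Rsub vkR in auto)
    have s2: "(\<Sum>x\<in>R. \<Sum>u\<in>R-{x}. \<bar>w {x,u}\<bar>) \<le> DD n w"
    proof -
      have "(\<Sum>x\<in>R. \<Sum>u\<in>R-{x}. \<bar>w {x,u}\<bar>) \<le> (\<Sum>x\<in>R. deg n w x)"
        unfolding deg_def by (intro sum_mono sum_mono2) (use Rsub in auto)
      also have "\<dots> \<le> DD n w" unfolding DD_def
        by (rule sum_mono2) (use Rsub in \<open>auto simp: deg_def sum_nonneg\<close>)
      finally show ?thesis .
    qed
    have mpos: "real (card R) > 0" "real (card R) * (real (card R) - 1) > 0" using m2 by auto
    have b: "(\<Sum>x\<in>R. (g x - avg)^2) / real (card R)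
       \<le> 3 * min 1 (deg n w vk / real (card R))
        + 3 * (2 / (real (card R) * (real (card R) - 1)))
        + 3 * min 1 (DD n w / (real (card R) * (real (card R) - 1)))"
    proof -
      have "(\<Sum>x\<in>R. \<bar>w {vk,x}\<bar>) / real (card R) \<le> deg n w vk / real (card R)"
        using s1 mpos by (intro divide_right_mono) auto
      moreover have "(\<Sum>x\<in>R. \<Sum>u\<in>R-{x}. \<bar>w {x,u}\<bar>) / (real (card R) * (real (card R) - 1))
          \<le> DD n w / (real (card R) * (real (card R) - 1))"
        using s2 mpos by (intro divide_right_mono) auto
      ultimately have "min 1 ((\<Sum>x\<in>R. \<bar>w {vk,x}\<bar>) / real (card R)) \<le> min 1 (deg n w vk / real (card R))"
        "min 1 ((\<Sum>x\<in>R. \<Sum>u\<in>R-{x}. \<bar>w {x,u}\<bar>) / (real (card R) * (real (card R) - 1))) \<le> min 1 (DD n w / (real (card R) * (real (card R) - 1)))"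
        by (auto intro: min.mono)
      then show ?thesis using sb(2) unfolding g_def by linarith
    qed
    show ?thesis using a b ce cR unfolding vk_def by simp
  qed
  show "\<bar>ham_diff n w v0 (Suc k) xs\<bar> \<le> 6" using conj by (rule conjunct1)
  show "cond_exp_prefix n v0 k (\<lambda>ys. (ham_diff n w v0 (Suc k) ys)^2) xs
       \<le> 3 * min 1 (deg n w (xs!k) / real (n - (k+1)))
        + 3 * (2 / (real (n - (k+1)) * (real (n - (k+1)) - 1)))
        + 3 * min 1 (DD n w / (real (n - (k+1)) * (real (n - (k+1)) - 1)))" using conj by (rule conjunct2)
qed



lemma DD_eq: "DD n w = 2 * total_weight n w"
proof -
  define P where "P = Sigma {..<n} (\<lambda>v. {..<n} - {v})"
  have finP: "finite P" unfolding P_def by simp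
  have "DD n w = (\<Sum>(v,u)\<in>P. \<bar>w {v,u}\<bar>)"
    unfolding DD_def deg_def P_def by (simp add: sum.Sigma)
  also have "\<dots> = (\<Sum>e\<in>Kn_edges n. \<Sum>(v,u)\<in>{x. x \<in> P \<and> (\<lambda>(v,u). {v,u}) x = e}. \<bar>w {v,u}\<bar>)"
  proof (rule sum.group[symmetric])
    show "finite (Kn_edges n)" unfolding Kn_edges_def
      by (rule finite_subset[of _ "Pow {..<n}"]) auto
    show "(\<lambda>(v,u). {v,u}) ` P \<subseteq> Kn_edges n" unfolding P_def Kn_edges_def by auto
  qed (rule finP)
  also have "\<dots> = (\<Sum>e\<in>Kn_edges n. 2 * \<bar>w e\<bar>)"
  proof (rule sum.cong[OF refl])
    fix e assume e: "e \<in> Kn_edges n"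
    then have es: "e \<subseteq> {..<n}" "card e = 2" unfolding Kn_edges_def by auto
    then obtain a b where ab0: "e = {a,b}" "a \<noteq> b" by (auto simp: card_2_iff)
    then have ab: "e = {a,b}" "a \<noteq> b" "a < n" "b < n" using es by auto
    have "{x. x \<in> P \<and> (\<lambda>(v,u). {v,u}) x = e} = {(a,b),(b,a)}"
      unfolding P_def ab(1) using ab by (auto simp: doubleton_eq_iff)
    then show "(\<Sum>(v,u)\<in>{x. x \<in> P \<and> (\<lambda>(v,u). {v,u}) x = e}. \<bar>w {v,u}\<bar>) = 2 * \<bar>w e\<bar>"
      using ab by (simp add: insert_commute)
  qed
  finally show ?thesis unfolding total_weight_def by (simp add: sum_distrib_left)
qed

lemma tele_exact:
  assumes "K \<ge> 1"
  shows "(\<Sum>m\<in>{K+1..K+d}. 1 / (real m * (real m - 1))) = 1 / real K - 1 / real (K + d)"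
proof (induction d)
  case 0 then show ?case by simp
next
  case (Suc d)
  have "{K+1..K + Suc d} = insert (K + Suc d) {K+1..K+d}" by auto
  then have "(\<Sum>m\<in>{K+1..K + Suc d}. 1 / (real m * (real m - 1)))
      = 1 / (real (K + Suc d) * (real (K + Suc d) - 1)) + (1 / real K - 1 / real (K + d))"
    using Suc by simp
  also have "\<dots> = 1 / real K - 1 / real (K + Suc d)"
  proof -
    define x where "x = real (K + d)"
    have x: "x > 0" using assms unfolding x_def by simp
    have e1: "real (K + Suc d) = x + 1" "real (K + Suc d) - 1 = x" unfolding x_def by simp_all
    have "1 / ((x+1) * x) = 1 / x - 1 / (x + 1)" using x by (simp add: field_simps)
    then show ?thesis unfolding e1 x_def[symmetric] by simp
  qed
  finally show ?case .
qed

lemma tele: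
  "(\<Sum>m\<in>{K+1..N}. 1 / (real m * (real m - 1))) \<le> 2 / (real K + 1)"
proof (cases "K \<ge> 1")
  case True
  have "(\<Sum>m\<in>{K+1..N}. 1 / (real m * (real m - 1))) \<le> 1 / real K"
  proof (cases "N \<ge> K")
    case True
    then obtain d where "N = K + d" using le_Suc_ex by blast
    then show ?thesis using tele_exact[OF \<open>K \<ge> 1\<close>, of d] by simp
  next
    case False
    then show ?thesis by simp
  qed
  also have "\<dots> \<le> 2 / (real K + 1)" using True by (simp add: field_simps)
  finally show ?thesis .
next
  case False
  then have K: "K = 0" by simp
  have "(\<Sum>m\<in>{1..N}. 1 / (real m * (real m - 1))) \<le> 2"
  proof (cases "N \<ge> 1")
    case True
    have "{1..N} = insert 1 {1+1..N}" using True by auto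
    then have "(\<Sum>m\<in>{1..N}. 1 / (real m * (real m - 1))) = (\<Sum>m\<in>{1+1..N}. 1 / (real m * (real m - 1)))"
      by simp
    also have "\<dots> \<le> 1 / real (1::nat)"
    proof -
      obtain d where "N = 1 + d" using True le_Suc_ex by blast
      then show ?thesis using tele_exact[of 1 d] by simp
    qed
    finally show ?thesis by simp
  qed simp
  then show ?thesis using K by simp
qed

lemma split_sum:
  fixes f :: "'i \<Rightarrow> real" and mm :: "'i \<Rightarrow> nat"
  assumes fin: "finite I" and inj: "inj_on mm I" and m1: "\<forall>i\<in>I. mm i \<ge> 1"
    and f01: "\<forall>i\<in>I. 0 \<le> f i \<and> f i \<le> 1" and s0: "s \<ge> 0"
    and tail: "\<And>K. (\<Sum>i\<in>{i\<in>I. mm i > K}. f i) \<le> 2 * s^2 / (real K + 1)"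
  shows "(\<Sum>i\<in>I. f i) \<le> 3 * s"
proof -
  define K where "K = nat \<lfloor>s\<rfloor>"
  have Ks: "real K \<le> s" "s < real K + 1" unfolding K_def using s0
    by (simp_all add: of_nat_nat)
  have split: "(\<Sum>i\<in>I. f i) = (\<Sum>i\<in>{i\<in>I. mm i \<le> K}. f i) + (\<Sum>i\<in>{i\<in>I. mm i > K}. f i)"
  proof -
    have eqI: "{i\<in>I. mm i \<le> K} \<union> {i\<in>I. mm i > K} = I" by auto
    have "(\<Sum>i\<in>{i\<in>I. mm i \<le> K} \<union> {i\<in>I. mm i > K}. f i) = (\<Sum>i\<in>{i\<in>I. mm i \<le> K}. f i) + (\<Sum>i\<in>{i\<in>I. mm i > K}. f i)"
      by (rule sum.union_disjoint) (use fin in auto)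
    then show ?thesis unfolding eqI .
  qed
  have "(\<Sum>i\<in>{i\<in>I. mm i \<le> K}. f i) \<le> (\<Sum>i\<in>{i\<in>I. mm i \<le> K}. 1)"
    using f01 by (intro sum_mono) auto
  also have "\<dots> = real (card {i\<in>I. mm i \<le> K})" by simp
  also have "card {i\<in>I. mm i \<le> K} \<le> card {1..K}"
    by (rule card_inj_on_le[where f = mm]) (use inj m1 in \<open>auto simp: inj_on_def\<close>)
  then have "real (card {i\<in>I. mm i \<le> K}) \<le> real K" by simp
  finally have p1: "(\<Sum>i\<in>{i\<in>I. mm i \<le> K}. f i) \<le> s" using Ks by linarith
  have "2 * s^2 / (real K + 1) \<le> 2 * s"
  proof -
    have "2 * s^2 \<le> 2 * s * (real K + 1)" using Ks s0 by (simp add: power2_eq_square mult_left_mono)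
    then show ?thesis by (simp add: divide_le_eq add_pos_nonneg)
  qed
  then show ?thesis using split p1 tail[of K] by linarith
qed



lemma choose2: "2 * (n choose 2) = n * (n - 1)"
proof -
  have "even (n * (n - 1))" by (cases "even n") auto
  then show ?thesis by (simp add: choose_two)
qed

lemma h_nonneg: "0 \<le> 1 / (real m * (real m - 1))"
  by (cases m) auto

lemma reidx:
  fixes h :: "nat \<Rightarrow> real"
  assumes fin: "finite I" and inj: "inj_on mm I" and rng: "\<forall>i\<in>I. K < mm i \<and> mm i \<le> N"
    and hn: "\<And>m. 0 \<le> h m"
  shows "(\<Sum>i\<in>I. h (mm i)) \<le> (\<Sum>m\<in>{K+1..N}. h m)"
proof -
  have "(\<Sum>i\<in>I. h (mm i)) = (\<Sum>m\<in>mm ` I. h m)" by (simp add: sum.reindex[OF inj] o_def)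
  also have "\<dots> \<le> (\<Sum>m\<in>{K+1..N}. h m)"
    by (rule sum_mono2) (use rng hn in auto)
  finally show ?thesis .
qed

lemma main_bound:
  assumes xs: "xs \<in> ham_seqs n v0" and n3: "n \<ge> 3"
    and wb: "\<forall>e\<in>Kn_edges n. \<bar>w e\<bar> \<le> 1"
  shows "(\<forall>i\<in>{1..n-1}. \<bar>ham_diff n w v0 i xs\<bar> \<le> 6) \<and>
         ham_pqv n w v0 xs \<le> 18 * sqrt (DD n w) + 12"
proof
  show "\<forall>i\<in>{1..n-1}. \<bar>ham_diff n w v0 i xs\<bar> \<le> 6"
  proof
    fix i assume i: "i \<in> {1..n-1}"
    then obtain k where "i = Suc k" "k + 1 < n" by (cases i) auto
    then show "\<bar>ham_diff n w v0 i xs\<bar> \<le> 6" using per_k(1)[OF xs _ wb] by simp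
  qed
  define I where "I = {..<n-1}"
  define mm where "mm k = n - (k+1)" for k
  define s where "s = sqrt (DD n w)"
  define a1 where "a1 k = min 1 (deg n w (xs!k) / real (mm k))" for k
  define a2 where "a2 k = 2 * (1 / (real (mm k) * (real (mm k) - 1)))" for k
  define a3 where "a3 k = min 1 (DD n w * (1 / (real (mm k) * (real (mm k) - 1))))" for k
  define V where "V k = cond_exp_prefix n v0 k (\<lambda>ys. (ham_diff n w v0 (Suc k) ys)^2) xs" for k
  have DDn: "0 \<le> DD n w" unfolding DD_def deg_def by (simp add: sum_nonneg)
  have s0: "s \<ge> 0" and ss: "s^2 = DD n w" unfolding s_def using DDn by simp_all
  have finI: "finite I" unfolding I_def by simp
  have injm: "inj_on mm I" unfolding I_def mm_def inj_on_def by auto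
  have m1: "\<forall>k\<in>I. mm k \<ge> 1" unfolding I_def mm_def by auto
  have mN: "\<forall>k\<in>I. mm k \<le> n" unfolding mm_def by auto
  have pqv: "ham_pqv n w v0 xs = (\<Sum>k\<in>I. V k)"
  proof -
    have "n - 1 = Suc (n - 2)" using n3 by simp
    then have "ham_pqv n w v0 xs = (\<Sum>i=Suc 0..Suc (n-2). cond_exp_prefix n v0 (i - 1) (\<lambda>ys. (ham_diff n w v0 i ys)^2) xs)"
      unfolding ham_pqv_def by simp
    also have "\<dots> = (\<Sum>k=0..n-2. V k)" unfolding sum.shift_bounds_cl_Suc_ivl V_def by simp
    also have "{0..n-2} = I" unfolding I_def using n3 by auto
    finally show ?thesis .
  qed
  have Vb: "V k \<le> 3 * a1 k + 3 * a2 k + 3 * a3 k" if k: "k \<in> I" for k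
    using per_k(2)[OF xs _ wb, of k] k unfolding V_def a1_def a2_def a3_def mm_def I_def by simp
  have sum1: "(\<Sum>k\<in>I. a1 k) \<le> 3 * s"
  proof (rule split_sum[OF finI injm m1 _ s0])
    show "\<forall>i\<in>I. 0 \<le> a1 i \<and> a1 i \<le> 1" unfolding a1_def deg_def by (simp add: sum_nonneg)
    fix K
    have "(\<Sum>k\<in>{k\<in>I. mm k > K}. a1 k) \<le> (\<Sum>k\<in>{k\<in>I. mm k > K}. deg n w (xs!k) / (real K + 1))"
    proof (rule sum_mono)
      fix k assume k: "k \<in> {k\<in>I. mm k > K}"
      have "a1 k \<le> deg n w (xs!k) / real (mm k)" unfolding a1_def by simp
      also have "\<dots> \<le> deg n w (xs!k) / (real K + 1)"
        using k by (intro divide_left_mono) (auto simp: deg_def sum_nonneg)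
      finally show "a1 k \<le> deg n w (xs!k) / (real K + 1)" .
    qed
    also have "\<dots> \<le> (\<Sum>k\<in>I. deg n w (xs!k)) / (real K + 1)"
      unfolding sum_divide_distrib[symmetric]
      by (intro divide_right_mono sum_mono2) (use finI in \<open>auto simp: deg_def sum_nonneg\<close>)
    also have "(\<Sum>k\<in>I. deg n w (xs!k)) \<le> DD n w"
    proof -
      have lx: "length xs = n" using ham_seqs_length[OF xs] .
      have dx: "distinct xs" "set xs = {..<n}" using xs unfolding ham_seqs_def by auto
      have inj: "inj_on (\<lambda>k. xs!k) I" unfolding I_def inj_on_def using dx lx by (auto simp: nth_eq_iff_index_eq)
      have "(\<Sum>k\<in>I. deg n w (xs!k)) = (\<Sum>v\<in>(\<lambda>k. xs!k) ` I. deg n w v)" by (simp add: sum.reindex[OF inj] o_def)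
      also have "\<dots> \<le> DD n w" unfolding DD_def
      proof (rule sum_mono2)
        show "(\<lambda>k. xs!k) ` I \<subseteq> {..<n}" unfolding I_def using dx lx nth_mem by fastforce
      qed (auto simp: deg_def sum_nonneg)
      finally show ?thesis .
    qed
    then have "(\<Sum>k\<in>I. deg n w (xs!k)) / (real K + 1) \<le> DD n w / (real K + 1)" by (simp add: divide_right_mono)
    also have "\<dots> \<le> 2 * s^2 / (real K + 1)" using ss DDn by (simp add: divide_right_mono)
    finally show "(\<Sum>k\<in>{k\<in>I. mm k > K}. a1 k) \<le> 2 * s^2 / (real K + 1)" .
  qed
  have sum3: "(\<Sum>k\<in>I. a3 k) \<le> 3 * s"
  proof (rule split_sum[OF finI injm m1 _ s0])
    show "\<forall>i\<in>I. 0 \<le> a3 i \<and> a3 i \<le> 1" unfolding a3_def using DDn h_nonneg by simp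
    fix K
    have "(\<Sum>k\<in>{k\<in>I. mm k > K}. a3 k) \<le> (\<Sum>k\<in>{k\<in>I. mm k > K}. DD n w * (1 / (real (mm k) * (real (mm k) - 1))))"
      unfolding a3_def by (rule sum_mono) simp
    also have "\<dots> = DD n w * (\<Sum>k\<in>{k\<in>I. mm k > K}. 1 / (real (mm k) * (real (mm k) - 1)))"
      by (simp add: sum_distrib_left)
    also have "(\<Sum>k\<in>{k\<in>I. mm k > K}. 1 / (real (mm k) * (real (mm k) - 1))) \<le> (\<Sum>m\<in>{K+1..n}. 1 / (real m * (real m - 1)))"
      by (rule reidx[where h = "\<lambda>m. 1 / (real m * (real m - 1))"]) (use finI injm mN h_nonneg in \<open>auto intro: inj_on_subset\<close>)
    also have "\<dots> \<le> 2 / (real K + 1)" by (rule tele)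
    finally have "(\<Sum>k\<in>{k\<in>I. mm k > K}. a3 k) \<le> DD n w * (2 / (real K + 1))"
      using DDn by (simp add: mult_left_mono)
    then show "(\<Sum>k\<in>{k\<in>I. mm k > K}. a3 k) \<le> 2 * s^2 / (real K + 1)" using ss by (simp add: algebra_simps)
  qed
  have sum2: "(\<Sum>k\<in>I. a2 k) \<le> 4"
  proof -
    have "(\<Sum>k\<in>I. a2 k) = 2 * (\<Sum>k\<in>I. 1 / (real (mm k) * (real (mm k) - 1)))"
      unfolding a2_def by (simp add: sum_distrib_left)
    also have "(\<Sum>k\<in>I. 1 / (real (mm k) * (real (mm k) - 1))) \<le> (\<Sum>m\<in>{0+1..n}. 1 / (real m * (real m - 1)))"
      by (rule reidx[where h = "\<lambda>m. 1 / (real m * (real m - 1))"]) (use finI injm mN m1 h_nonneg in auto)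
    also have "\<dots> \<le> 2 / (real 0 + 1)" by (rule tele)
    finally show ?thesis by simp
  qed
  have "ham_pqv n w v0 xs \<le> (\<Sum>k\<in>I. 3 * a1 k + 3 * a2 k + 3 * a3 k)"
    unfolding pqv by (rule sum_mono) (rule Vb)
  also have "\<dots> = 3 * (\<Sum>k\<in>I. a1 k) + 3 * (\<Sum>k\<in>I. a2 k) + 3 * (\<Sum>k\<in>I. a3 k)"
    by (simp add: sum.distrib sum_distrib_left)
  also have "\<dots> \<le> 18 * s + 12" using sum1 sum2 sum3 by linarith
  finally show "ham_pqv n w v0 xs \<le> 18 * sqrt (DD n w) + 12" unfolding s_def .
qed

theorem lemma4p2:
  fixes n v0 :: nat and w :: "nat set \<Rightarrow> real" and d :: real
  assumes n3: "n \<ge> 3"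
    and wbound: "\<forall>e\<in>Kn_edges n. \<bar>w e\<bar> \<le> 1"
    and d01: "0 \<le> d" "d \<le> 1"
    and wtot: "total_weight n w = d * real (n choose 2)"
    and v0: "v0 < n"
    and v0light: "(\<Sum>v\<in>{..<n} - {v0}. \<bar>w {v0, v}\<bar>) \<le> 2 * total_weight n w / real n"
  shows "\<forall>xs\<in>ham_seqs n v0.
           (\<forall>i\<in>{1..n-1}. \<bar>ham_diff n w v0 i xs\<bar> \<le> 6) \<and>
           ham_pqv n w v0 xs \<le> 60 * (sqrt d * real n + 1)"
proof
  fix xs assume xs: "xs \<in> ham_seqs n v0"
  note mb = main_bound[OF xs n3 wbound]
  have "DD n w = d * (real n * (real n - 1))"
  proof -
    have "real (2 * (n choose 2)) = real (n * (n - 1))" by (simp only: choose2)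
    then have "2 * real (n choose 2) = real n * (real n - 1)" using n3 by (simp add: of_nat_diff)
    then have e: "2 * real (n choose 2) = real n * (real n - 1)" by simp
    have "DD n w = d * (2 * real (n choose 2))" unfolding DD_eq wtot by simp
    then show ?thesis unfolding e .
  qed
  also have "\<dots> \<le> d * (real n)^2" using d01 by (intro mult_left_mono) (auto simp: power2_eq_square algebra_simps)
  finally have "sqrt (DD n w) \<le> sqrt (d * (real n)^2)" by (rule real_sqrt_le_mono)
  also have "\<dots> = sqrt d * real n" by (simp add: real_sqrt_mult)
  finally have sq: "sqrt (DD n w) \<le> sqrt d * real n" .
  have "0 \<le> sqrt d * real n" using d01 by simp
  have lin: "18 * x + 12 \<le> 60 * (y + 1)" if "x \<le> y" "0 \<le> y" for x y :: real using that by (simp add: algebra_simps)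
  have "18 * sqrt (DD n w) + 12 \<le> 60 * (sqrt d * real n + 1)" by (rule lin[OF sq]) (use d01 in simp)
  then show "(\<forall>i\<in>{1..n-1}. \<bar>ham_diff n w v0 i xs\<bar> \<le> 6) \<and> ham_pqv n w v0 xs \<le> 60 * (sqrt d * real n + 1)"
    using mb by linarith
qed

end
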